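(* Let $X,Y$ be Banach spaces and $f:X\to Y$ a map. Suppose there exist a closed ball $B_r$ of radius $r>0$ in $X$, a closed ball $B_s$ of radius $s\ge0$ in $Y$, and a compact set $K\subseteq Y$ such that $f(B_r)\subseteq K+B_s$. Then $$\varphi_f(r):=\inf\{\|f(x)-f(y)\|: x,y\in X,\ \|x-y\|\ge r\}\le 2s.$$
   Context: All Banach spaces are real and infinite-dimensional. $K+B_s=\{k+b: k\in K, b\in B_s\}$. *)

theory Defs
  imports "HOL-Analysis.Analysis"
begin

definition infinite_dimensional :: "'a::real_normed_vector itself \<Rightarrow> bool" where
  "infinite_dimensional (_::'a itself) \<longleftrightarrow> (\<forall>B::'a set. finite B \<longrightarrow> span B \<noteq> UNIV)"

definition phi_mod :: "('a::real_normed_vector \<Rightarrow> 'b::real_normed_vector) \<Rightarrow> real \<Rightarrow> real" where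
  "phi_mod f r = Inf {norm (f x - f y) | x y. norm (x - y) \<ge> r}"

end

theory Submission
  imports Defs
begin


lemma closed_of_cballs:
  fixes V :: "'a::real_normed_vector set"
  assumes "\<And>R. compact (V \<inter> cball 0 R)"
  shows "closed V"
proof -
  have "x \<in> V" if "x \<in> closure V" for x
  proof -
    have "x \<in> ball x 1 \<inter> closure V" using that by simp
    also have "\<dots> \<subseteq> closure (ball x 1 \<inter> V)" by (rule open_Int_closure_subset) simp
    also have "\<dots> \<subseteq> closure (V \<inter> cball 0 (norm x + 1))"
    proof (rule closure_mono)
      show "ball x 1 \<inter> V \<subseteq> V \<inter> cball 0 (norm x + 1)"
      proof
        fix y assume "y \<in> ball x 1 \<inter> V"
        then have "norm (x - y) < 1" "y \<in> V" by (auto simp: dist_norm)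
        moreover have "norm y \<le> norm x + norm (x - y)" using norm_triangle_sub[of y x] by (simp add: norm_minus_commute)
        ultimately show "y \<in> V \<inter> cball 0 (norm x + 1)" by auto
      qed
    qed
    also have "\<dots> = V \<inter> cball 0 (norm x + 1)"
      using assms compact_imp_closed closure_closed by blast
    finally show ?thesis by blast
  qed
  then show ?thesis using closure_subset_eq closure_subset by blast
qed

lemma span_cball_compact:
  fixes S :: "'a::real_normed_vector set"
  assumes "finite S"
  shows "compact (span S \<inter> cball 0 R)"
  using assms
proof (induction S arbitrary: R rule: finite_induct)
  case empty
  have "span {} \<inter> cball (0::'a) R \<subseteq> {0}" by auto
  then show ?case using finite_imp_compact finite_subset by blast
next
  case (insert a S)
  show ?case
  proof (cases "a \<in> span S")
    case True
    then show ?thesis using insert.IH span_redundant by metis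
  next
    case False
    have cl: "closed (span S)" by (rule closed_of_cballs) (rule insert.IH)
    define \<delta> where "\<delta> = infdist a (span S)"
    have dpos: "\<delta> > 0" unfolding \<delta>_def
      using infdist_pos_not_in_closed[OF cl _ False] span_zero by blast
    have dle: "\<delta> \<le> norm (a - w)" if "w \<in> span S" for w
      unfolding \<delta>_def using infdist_le[OF that] by (simp add: dist_norm)
    define R' where "R' = R + R / \<delta> * norm a"
    define T where "T = (\<lambda>p. fst p + snd p *\<^sub>R a) ` ((span S \<inter> cball 0 R') \<times> cball (0::real) (R / \<delta>))"
    have cT: "compact T" unfolding T_def
      by (intro compact_continuous_image compact_Times insert.IH compact_cball continuous_intros)
    have "span (insert a S) \<inter> cball 0 R = T \<inter> cball 0 R"
    proof
      show "T \<inter> cball 0 R \<subseteq> span (insert a S) \<inter> cball 0 R"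
      proof
        fix x assume "x \<in> T \<inter> cball 0 R"
        then obtain p where p: "p \<in> (span S \<inter> cball 0 R') \<times> cball (0::real) (R / \<delta>)"
          "x = fst p + snd p *\<^sub>R a" "norm x \<le> R"
          unfolding T_def by auto
        define v t where "v = fst p" and "t = snd p"
        have "v \<in> span S" "x = v + t *\<^sub>R a" "norm x \<le> R" using p unfolding v_def t_def by auto
        moreover have "v + t *\<^sub>R a \<in> span (insert a S)"
        proof -
          have "span S \<subseteq> span (insert a S)" by (rule span_mono) auto
          moreover have "a \<in> span (insert a S)" by (rule span_base) simp
          ultimately show ?thesis using \<open>v \<in> span S\<close> by (intro span_add span_mul) auto
        qed
        ultimately show "x \<in> span (insert a S) \<inter> cball 0 R" by auto
      qed
    next
      show "span (insert a S) \<inter> cball 0 R \<subseteq> T \<inter> cball 0 R"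
      proof
        fix x assume x: "x \<in> span (insert a S) \<inter> cball 0 R"
        then obtain t where v: "x - t *\<^sub>R a \<in> span S" by (auto simp: span_insert)
        have nx: "norm x \<le> R" using x by auto
        have tb: "\<bar>t\<bar> * \<delta> \<le> R"
        proof (cases "t = 0")
          case True then show ?thesis using order_trans[OF norm_ge_zero nx] by simp
        next
          case False
          have "(- inverse t) *\<^sub>R (x - t *\<^sub>R a) \<in> span S" using v span_mul by blast
          then have "\<delta> \<le> norm (a - (- inverse t) *\<^sub>R (x - t *\<^sub>R a))" by (rule dle)
          also have "a - (- inverse t) *\<^sub>R (x - t *\<^sub>R a) = inverse t *\<^sub>R x"
            using False by (simp add: algebra_simps)
          also have "norm (inverse t *\<^sub>R x) = norm x / \<bar>t\<bar>" by (simp add: divide_inverse mult.commute)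
          finally have "\<delta> \<le> norm x / \<bar>t\<bar>" .
          then have "\<delta> * \<bar>t\<bar> \<le> norm x" using False by (simp add: field_simps)
          then show ?thesis using nx by (simp add: mult.commute)
        qed
        then have tb': "\<bar>t\<bar> \<le> R / \<delta>" using dpos by (simp add: field_simps)
        have "norm (x - t *\<^sub>R a) \<le> norm x + \<bar>t\<bar> * norm a"
          using norm_triangle_ineq4[of x "t *\<^sub>R a"] by simp
        also have "\<dots> \<le> R'" unfolding R'_def
          using nx tb' by (intro add_mono mult_right_mono) auto
        finally have "x - t *\<^sub>R a \<in> span S \<inter> cball 0 R'" using v by auto
        moreover have "t \<in> cball 0 (R / \<delta>)" using tb' by auto
        ultimately have mem: "(x - t *\<^sub>R a, t) \<in> (span S \<inter> cball 0 R') \<times> cball (0::real) (R / \<delta>)" by auto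
        have "x \<in> T" unfolding T_def by (rule image_eqI[where x="(x - t *\<^sub>R a, t)", OF _ mem]) simp
        then show "x \<in> T \<inter> cball 0 R" using x by auto
      qed
    qed
    then show ?thesis using compact_Int_closed[OF cT closed_cball] by simp
  qed
qed

lemma unit_far_from_span:
  fixes S :: "'a::real_normed_vector set"
  assumes "finite S" "z \<notin> span S"
  shows "\<exists>u. norm u = 1 \<and> (\<forall>w\<in>span S. 1 \<le> norm (u - w))"
proof -
  define C where "C = span S \<inter> cball 0 (2 * norm z)"
  have "compact C" unfolding C_def using span_cball_compact[OF assms(1)] .
  moreover have "0 \<in> C" unfolding C_def by (simp add: span_zero)
  moreover have "continuous_on C (\<lambda>v. norm (z - v))" by (intro continuous_intros)
  ultimately have "\<exists>x\<in>C. \<forall>y\<in>C. norm (z - x) \<le> norm (z - y)"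
    by (intro continuous_attains_inf) auto
  then obtain v0 where v0: "v0 \<in> C" "\<And>y. y \<in> C \<Longrightarrow> norm (z - v0) \<le> norm (z - y)"
    by blast
  have v0S: "v0 \<in> span S" using v0(1) unfolding C_def by auto
  have best: "norm (z - v0) \<le> norm (z - w)" if w: "w \<in> span S" for w
  proof (cases "norm w \<le> 2 * norm z")
    case True then show ?thesis using v0(2) w unfolding C_def by auto
  next
    case False
    have "norm (z - v0) \<le> norm (z - 0)" using v0(2) \<open>0 \<in> C\<close> by blast
    also have "\<dots> = norm z" by simp
    also have "\<dots> \<le> norm w - norm z" using False by simp
    also have "\<dots> \<le> norm (z - w)" using norm_triangle_sub[of w z] by (simp add: norm_minus_commute)
    finally show ?thesis .
  qed
  define \<delta> where "\<delta> = norm (z - v0)"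
  have dpos: "\<delta> > 0" unfolding \<delta>_def using v0S assms(2) by auto
  define u where "u = (1 / \<delta>) *\<^sub>R (z - v0)"
  have "norm u = 1" unfolding u_def \<delta>_def using dpos \<delta>_def by simp
  moreover have "1 \<le> norm (u - w)" if w: "w \<in> span S" for w
  proof -
    have "v0 + \<delta> *\<^sub>R w \<in> span S" using v0S w by (intro span_add span_mul)
    then have "\<delta> \<le> norm (z - (v0 + \<delta> *\<^sub>R w))" using best unfolding \<delta>_def by blast
    also have "z - (v0 + \<delta> *\<^sub>R w) = \<delta> *\<^sub>R (u - w)"
      unfolding u_def using dpos by (simp add: algebra_simps)
    also have "norm (\<delta> *\<^sub>R (u - w)) = \<delta> * norm (u - w)" using dpos by simp
    finally show ?thesis using dpos by simp
  qed
  ultimately show ?thesis by blast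
qed

primrec seqL :: "('a set \<Rightarrow> 'a) \<Rightarrow> nat \<Rightarrow> 'a list" where
  "seqL F 0 = []"
| "seqL F (Suc n) = F (set (seqL F n)) # seqL F n"

lemma seqL_mem: "m < n \<Longrightarrow> F (set (seqL F m)) \<in> set (seqL F n)"
  by (induction n) (auto simp: less_Suc_eq)

lemma separated_seq:
  assumes "\<forall>B::'a::real_normed_vector set. finite B \<longrightarrow> span B \<noteq> UNIV"
  shows "\<exists>g::nat \<Rightarrow> 'a. (\<forall>n. norm (g n) = 1) \<and> (\<forall>m n. m \<noteq> n \<longrightarrow> 1 \<le> norm (g m - g n))"
proof -
  define P where "P B u \<longleftrightarrow> norm (u::'a) = 1 \<and> (\<forall>w\<in>span B. 1 \<le> norm (u - w))" for B u
  have ex: "\<exists>u. P B u" if "finite B" for B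
  proof -
    have "span B \<noteq> UNIV" using assms that by blast
    then obtain z where "z \<notin> span B" by auto
    then show ?thesis using unit_far_from_span[OF that] by (simp add: P_def)
  qed
  define F where "F = (\<lambda>B. SOME u. P B u)"
  define g where "g = (\<lambda>n. F (set (seqL F n)))"
  have Pg: "P (set (seqL F n)) (g n)" for n
    unfolding g_def F_def by (rule someI_ex[OF ex]) simp
  have lt: "1 \<le> norm (g n - g m)" if "m < n" for m n
  proof -
    have "g m \<in> set (seqL F n)" unfolding g_def using seqL_mem[OF that] .
    then have "g m \<in> span (set (seqL F n))" by (rule span_base)
    then show ?thesis using Pg[of n] by (simp add: P_def)
  qed
  have "1 \<le> norm (g m - g n)" if "m \<noteq> n" for m n
  proof (cases "m < n")
    case True then show ?thesis using lt[OF True] by (simp add: norm_minus_commute)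
  next
    case False then show ?thesis using lt[of n m] that by simp
  qed
  moreover have "norm (g n) = 1" for n using Pg[of n] by (simp add: P_def)
  ultimately show ?thesis by blast
qed


theorem lemma4p3:
  fixes f :: "'a::banach \<Rightarrow> 'b::banach"
    and c :: 'a and d :: 'b and r s :: real and K :: "'b set"
  assumes "infinite_dimensional TYPE('a)"
    and "infinite_dimensional TYPE('b)"
    and "r > 0" and "s \<ge> 0"
    and "compact K"
    and "f ` cball c r \<subseteq> {k + b | k b. k \<in> K \<and> b \<in> cball d s}"
  shows "phi_mod f r \<le> 2 * s"
proof -
  have "\<forall>B::'a set. finite B \<longrightarrow> span B \<noteq> UNIV"
    using assms(1) unfolding infinite_dimensional_def by blast
  then obtain g :: "nat \<Rightarrow> 'a" where g1: "\<And>n. norm (g n) = 1"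
    and gsep: "\<And>m n. m \<noteq> n \<Longrightarrow> 1 \<le> norm (g m - g n)"
    using separated_seq by blast
  have "\<forall>x\<in>cball c r. \<exists>p. f x = fst p + snd p \<and> fst p \<in> K \<and> snd p \<in> cball d s"
  proof
    fix x assume "x \<in> cball c r"
    then have "f x \<in> {k + b | k b. k \<in> K \<and> b \<in> cball d s}" using assms(6) by blast
    then obtain k b where "f x = k + b" "k \<in> K" "b \<in> cball d s" by blast
    then show "\<exists>p. f x = fst p + snd p \<and> fst p \<in> K \<and> snd p \<in> cball d s"
      by (intro exI[where x="(k, b)"]) simp
  qed
  then obtain pp where pp: "\<And>x. x \<in> cball c r \<Longrightarrow> f x = fst (pp x) + snd (pp x) \<and> fst (pp x) \<in> K \<and> snd (pp x) \<in> cball d s"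
    by metis
  define xs where "xs n = c + r *\<^sub>R g n" for n
  have xsin: "xs n \<in> cball c r" for n
    unfolding xs_def using g1[of n] assms(3) by (simp add: dist_norm)
  define ks where "ks n = fst (pp (xs n))" for n
  have ksK: "ks n \<in> K" for n using pp[OF xsin] unfolding ks_def by blast
  obtain l \<sigma> where \<sigma>: "strict_mono \<sigma>" "(ks \<circ> \<sigma>) \<longlonglongrightarrow> l"
    using assms(5) ksK unfolding compact_eq_seq_compact_metric seq_compact_def by metis
  have cau: "Cauchy (ks \<circ> \<sigma>)" using \<sigma>(2) by (rule LIMSEQ_imp_Cauchy)
  define A where "A = {norm (f x - f y) | x y. norm (x - y) \<ge> r}"
  have bdd: "bdd_below A" unfolding A_def by (rule bdd_belowI[where m=0]) auto
  have "Inf A \<le> 2 * s + e" if e: "e > 0" for e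
  proof -
    obtain M where M: "\<And>m n. m \<ge> M \<Longrightarrow> n \<ge> M \<Longrightarrow> dist ((ks \<circ> \<sigma>) m) ((ks \<circ> \<sigma>) n) < e"
      using metric_CauchyD[OF cau e] by blast
    define m where "m = \<sigma> M"
    define n where "n = \<sigma> (Suc M)"
    have mn: "m \<noteq> n" unfolding m_def n_def using \<sigma>(1) strict_mono_eq by fastforce
    have dk: "dist (ks m) (ks n) < e" using M[of M "Suc M"] unfolding m_def n_def by simp
    define x where "x = xs m"
    define y where "y = xs n"
    have "norm (x - y) = r * norm (g m - g n)"
      unfolding x_def y_def xs_def using assms(3)
      by (metis add_diff_cancel_left norm_scaleR abs_of_pos scaleR_diff_right)
    also have "\<dots> \<ge> r" using gsep[OF mn] assms(3) by simp
    finally have xy: "norm (x - y) \<ge> r" .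
    then have inA: "norm (f x - f y) \<in> A" unfolding A_def by blast
    obtain bx where px: "f x = ks m + bx" "bx \<in> cball d s"
      using pp[OF xsin[of m]] unfolding x_def ks_def by blast
    obtain by' where py: "f y = ks n + by'" "by' \<in> cball d s"
      using pp[OF xsin[of n]] unfolding y_def ks_def by blast
    have "norm (bx - by') \<le> norm (bx - d) + norm (d - by')"
      using norm_triangle_ineq[of "bx - d" "d - by'"] by simp
    also have "\<dots> \<le> 2 * s" using px(2) py(2) by (simp add: dist_norm norm_minus_commute)
    finally have bb: "norm (bx - by') \<le> 2 * s" .
    have "f x - f y = (ks m - ks n) + (bx - by')" using px py by (simp add: algebra_simps)
    then have "norm (f x - f y) \<le> norm (ks m - ks n) + norm (bx - by')"
      by (metis norm_triangle_ineq)
    also have "\<dots> \<le> e + 2 * s" using dk bb by (simp add: dist_norm)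
    finally have "norm (f x - f y) \<le> 2 * s + e" by simp
    then show ?thesis using cInf_lower2[OF inA _ bdd] by simp
  qed
  then have "Inf A \<le> 2 * s" by (rule field_le_epsilon)
  then show ?thesis unfolding phi_mod_def A_def .
qed

end
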